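(* Let $G$ be a finite group and suppose $G$ has a subgroup $H$ admitting a nontrivial homomorphism $\phi: H \to \{\pm 1\}$. Suppose further that there is a set $T$ of representatives of the left cosets of $H$ in $G$ such that $c^2 = 1$ for all $c \in T$. Then there is a function $f: G \to \{\pm 1\}$ with $\mathbb{E}_{x\in G} f(x) = 0$ and \[ \Pr_{x,y}\,[f(x)f(y) = f(xy)] \ge \frac{1}{2}\left(1 + \frac{|H|}{|G|}\right), \] where $x,y$ are chosen uniformly and independently from $G$.
   Context: $\mathbb{E}$ denotes the average over the uniform distribution on $G$. *)

theory Defs
  imports "HOL-Algebra.Algebra"
begin

end

theory Submission
  imports Defs
begin

locale thm4 = group G for G (structure) +
  fixes H :: "'a set" and \<phi> :: "'a \<Rightarrow> int" and T :: "'a set"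
  assumes fin: "finite (carrier G)"
    and sub: "subgroup H G"
    and phi_pm: "\<forall>h\<in>H. \<phi> h \<in> {1, -1}"
    and phi_mult: "\<forall>x\<in>H. \<forall>y\<in>H. \<phi> (x \<otimes> y) = \<phi> x * \<phi> y"
    and nontriv: "\<exists>h\<in>H. \<phi> h \<noteq> 1"
    and T_sub: "T \<subseteq> carrier G"
    and T_bij: "bij_betw (\<lambda>t. t <# H) T {x <# H | x. x \<in> carrier G}"
    and invol: "\<forall>c\<in>T. c \<otimes> c = \<one>"
begin

lemma H_carr: "H \<subseteq> carrier G" by (rule subgroup.subset[OF sub])
lemma H_mult: "x \<in> H \<Longrightarrow> y \<in> H \<Longrightarrow> x \<otimes> y \<in> H" by (rule subgroup.m_closed[OF sub])
lemma H_inv: "x \<in> H \<Longrightarrow> inv x \<in> H" by (rule subgroup.m_inv_closed[OF sub])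
lemma H_one: "\<one> \<in> H" by (rule subgroup.one_closed[OF sub])
lemma finH: "finite H" using fin H_carr by (rule finite_subset[rotated])

lemma lcos_mem: "a \<in> carrier G \<Longrightarrow> b \<in> a <# H \<longleftrightarrow> (\<exists>h\<in>H. b = a \<otimes> h)"
  unfolding l_coset_def by auto

lemma mc1[simp]: "x \<in> carrier G \<Longrightarrow> y \<in> carrier G \<Longrightarrow> x \<otimes> y \<otimes> inv y = x"
  by (simp add: m_assoc)
lemma mc2[simp]: "x \<in> carrier G \<Longrightarrow> y \<in> carrier G \<Longrightarrow> x \<otimes> inv y \<otimes> y = x"
  by (simp add: m_assoc)

lemma lcos_eq_iff:
  assumes a: "a \<in> carrier G" and b: "b \<in> carrier G"
  shows "(a <# H = b <# H) \<longleftrightarrow> inv a \<otimes> b \<in> H"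
proof
  assume e: "a <# H = b <# H"
  have "b \<in> b <# H" using b H_one unfolding l_coset_def by force
  then have "b \<in> a <# H" using e by simp
  then obtain h where h: "h \<in> H" "b = a \<otimes> h" unfolding l_coset_def by auto
  then have "inv a \<otimes> b = h" using a H_carr h(1) by (auto simp add: m_assoc[symmetric])
  then show "inv a \<otimes> b \<in> H" using h by simp
next
  assume i: "inv a \<otimes> b \<in> H"
  define k where "k = inv a \<otimes> b"
  have bk: "b = a \<otimes> k" using a b unfolding k_def by (simp add: m_assoc[symmetric])
  have kc: "k \<in> carrier G" using a b k_def by simp
  show "a <# H = b <# H"
  proof
    show "a <# H \<subseteq> b <# H"
    proof
      fix x assume "x \<in> a <# H"
      then obtain h where h: "h \<in> H" "x = a \<otimes> h" unfolding l_coset_def by auto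
      have hc: "h \<in> carrier G" using h H_carr by blast
      have "x = b \<otimes> (inv k \<otimes> h)" using h bk a kc hc by (simp add: m_assoc[symmetric])
      moreover have "inv k \<otimes> h \<in> H" using H_inv H_mult i h k_def by blast
      ultimately show "x \<in> b <# H" unfolding l_coset_def by blast
    qed
  next
    show "b <# H \<subseteq> a <# H"
    proof
      fix x assume "x \<in> b <# H"
      then obtain h where h: "h \<in> H" "x = b \<otimes> h" unfolding l_coset_def by auto
      have hc: "h \<in> carrier G" using h H_carr by blast
      have "x = a \<otimes> (k \<otimes> h)" using h bk a kc hc by (simp add: m_assoc)
      moreover have "k \<otimes> h \<in> H" using H_mult i h k_def by blast
      ultimately show "x \<in> a <# H" unfolding l_coset_def by blast
    qed
  qed
qed

lemma lcos_H_iff: "x \<in> carrier G \<Longrightarrow> (x <# H = H) \<longleftrightarrow> x \<in> H"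
proof -
  assume x: "x \<in> carrier G"
  have oh: "\<And>h. h \<in> H \<Longrightarrow> \<one> \<otimes> h = h" using H_carr by auto
  have "\<one> <# H = H" unfolding l_coset_def using oh by force
  then have "(x <# H = H) = (x <# H = \<one> <# H)" by simp
  also have "\<dots> = (inv x \<otimes> \<one> \<in> H)" using lcos_eq_iff[of x \<one>] x by simp
  also have "\<dots> = (x \<in> H)"
  proof
    assume "inv x \<otimes> \<one> \<in> H"
    then show "x \<in> H" using H_inv[of "inv x"] x by simp
  next
    assume "x \<in> H" then show "inv x \<otimes> \<one> \<in> H" using x H_inv by simp
  qed
  finally show ?thesis .
qed

lemma lcos_mult_eq: "x \<in> carrier G \<Longrightarrow> k \<in> H \<Longrightarrow> (x \<otimes> k) <# H = x <# H"
proof -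
  assume x: "x \<in> carrier G" and k: "k \<in> H"
  have kc: "k \<in> carrier G" using k H_carr by blast
  have "inv x \<otimes> (x \<otimes> k) = k" using x kc by (simp add: m_assoc[symmetric])
  then show ?thesis using lcos_eq_iff[of x "x \<otimes> k"] x kc k by simp
qed


definition tau where "tau x = (THE t. t \<in> T \<and> t <# H = x <# H)"

lemma tau_ex1: "x \<in> carrier G \<Longrightarrow> \<exists>!t. t \<in> T \<and> t <# H = x <# H"
proof -
  assume x: "x \<in> carrier G"
  have "x <# H \<in> (\<lambda>t. t <# H) ` T" using T_bij x unfolding bij_betw_def by auto
  then obtain t where t: "t \<in> T" "t <# H = x <# H" by auto
  moreover have "\<And>s. s \<in> T \<Longrightarrow> s <# H = x <# H \<Longrightarrow> s = t"
    using T_bij t unfolding bij_betw_def inj_on_def by auto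
  ultimately show ?thesis by blast
qed

lemma tau: "x \<in> carrier G \<Longrightarrow> tau x \<in> T \<and> tau x <# H = x <# H"
  unfolding tau_def using theI'[OF tau_ex1] by blast

lemma tau_eq: "x \<in> carrier G \<Longrightarrow> t \<in> T \<Longrightarrow> t <# H = x <# H \<Longrightarrow> tau x = t"
  using tau tau_ex1 by blast

lemma tau_carr: "x \<in> carrier G \<Longrightarrow> tau x \<in> carrier G"
  using tau T_sub by blast

lemma tau_H: "x \<in> carrier G \<Longrightarrow> inv (tau x) \<otimes> x \<in> H"
  using tau[of x] tau_carr[of x] lcos_eq_iff[of "tau x" x] by simp

definition f0 where "f0 x = (if x \<in> H then \<phi> x else \<phi> (inv (tau x) \<otimes> x))"

lemma phi_one: "\<phi> \<one> = 1"
proof -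
  have "\<phi> \<one> = \<phi> \<one> * \<phi> \<one>" using phi_mult H_one by (metis one_closed r_one)
  moreover have "\<phi> \<one> \<in> {1,-1}" using phi_pm H_one by blast
  ultimately show ?thesis by auto
qed

lemma phi_sq: "h \<in> H \<Longrightarrow> \<phi> h * \<phi> h = 1"
  using phi_pm by fastforce

lemma f0_pm: "x \<in> carrier G \<Longrightarrow> f0 x \<in> {1,-1}"
  unfolding f0_def using phi_pm tau_H by auto

lemma f0_sq: "x \<in> carrier G \<Longrightarrow> f0 x * f0 x = 1"
  using f0_pm by fastforce

lemma f0_H: "x \<in> H \<Longrightarrow> f0 x = \<phi> x"
  unfolding f0_def by simp

lemma f0_right:
  assumes x: "x \<in> carrier G" and k: "k \<in> H"
  shows "f0 (x \<otimes> k) = f0 x * \<phi> k"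
proof (cases "x \<in> H")
  case True
  then show ?thesis using k H_mult phi_mult unfolding f0_def by auto
next
  case False
  have kc: "k \<in> carrier G" using k H_carr by blast
  have nx: "x \<otimes> k \<notin> H"
  proof
    assume "x \<otimes> k \<in> H"
    then have "(x \<otimes> k) \<otimes> inv k \<in> H" using H_mult H_inv k by blast
    then show False using False x kc by (simp add: m_assoc)
  qed
  have t: "tau (x \<otimes> k) = tau x"
    using tau_eq[of "x \<otimes> k" "tau x"] tau[of x] lcos_mult_eq[OF x k] x kc by simp
  have "inv (tau x) \<otimes> (x \<otimes> k) = (inv (tau x) \<otimes> x) \<otimes> k"
    using x kc tau_carr[OF x] by (simp add: m_assoc)
  then show ?thesis using False nx t phi_mult tau_H[OF x] k unfolding f0_def by simp
qed


definition Cs where "Cs = {x <# H | x. x \<in> carrier G} - {H}"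
definition Sg where "Sg = PiE Cs (\<lambda>_. {1, -1::int})"
definition sg :: "('a set \<Rightarrow> int) \<Rightarrow> 'a \<Rightarrow> int" where "sg \<sigma> x = (if x \<in> H then 1 else \<sigma> (x <# H))"
definition fl :: "'a set \<Rightarrow> ('a set \<Rightarrow> int) \<Rightarrow> ('a set \<Rightarrow> int)" where "fl a \<sigma> = \<sigma>(a := - \<sigma> a)"

lemma finCs: "finite Cs"
proof -
  have "{x <# H | x. x \<in> carrier G} = (\<lambda>x. x <# H) ` carrier G" by auto
  then show ?thesis unfolding Cs_def using fin by simp
qed

lemma finSg: "finite Sg" unfolding Sg_def using finCs by (simp add: finite_PiE)

lemma Sg_ne: "Sg \<noteq> {}" unfolding Sg_def by (simp add: PiE_eq_empty_iff)

lemma coset_Cs: "x \<in> carrier G \<Longrightarrow> x \<notin> H \<Longrightarrow> x <# H \<in> Cs"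
  unfolding Cs_def using lcos_H_iff by auto

lemma H_notin_Cs: "H \<notin> Cs" unfolding Cs_def by auto

lemma sg_pm: "\<sigma> \<in> Sg \<Longrightarrow> x \<in> carrier G \<Longrightarrow> sg \<sigma> x \<in> {1,-1}"
  unfolding sg_def Sg_def using coset_Cs by (auto simp: PiE_mem)

lemma sg_sq: "\<sigma> \<in> Sg \<Longrightarrow> x \<in> carrier G \<Longrightarrow> sg \<sigma> x * sg \<sigma> x = 1"
  using sg_pm by fastforce

lemma fl_Sg: "a \<in> Cs \<Longrightarrow> \<sigma> \<in> Sg \<Longrightarrow> fl a \<sigma> \<in> Sg"
  unfolding fl_def Sg_def by (auto simp: PiE_iff extensional_def)

lemma fl_fl: "fl a (fl a (\<sigma> :: 'a set \<Rightarrow> int)) = \<sigma>"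
  unfolding fl_def by simp

lemma flip_sum_zero:
  assumes a: "a \<in> Cs" and g: "\<forall>\<sigma>\<in>Sg. g (fl a \<sigma>) = - g \<sigma>"
  shows "sum g Sg = (0::int)"
proof -
  have b: "bij_betw (fl a) Sg Sg"
    by (rule bij_betw_byWitness[where f'="fl a"]) (auto simp: fl_fl fl_Sg a)
  have "sum g Sg = sum (\<lambda>\<sigma>. g (fl a \<sigma>)) Sg"
    using sum.reindex_bij_betw[OF b, of g] by simp
  also have "\<dots> = sum (\<lambda>\<sigma>. - g \<sigma>) Sg" using g by simp
  also have "\<dots> = - sum g Sg" by (simp add: sum_negf)
  finally show ?thesis by simp
qed

lemma sg_fl: "a \<in> Cs \<Longrightarrow> x \<in> carrier G \<Longrightarrow>
   sg (fl a \<sigma>) x = (if x <# H = a then -1 else 1) * sg \<sigma> x"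
proof -
  assume a: "a \<in> Cs" and x: "x \<in> carrier G"
  show ?thesis
  proof (cases "x \<in> H")
    case True
    then have "x <# H \<noteq> a" using lcos_H_iff[OF x] a H_notin_Cs by force
    then show ?thesis using True unfolding sg_def fl_def by simp
  next
    case False
    then show ?thesis unfolding sg_def fl_def by simp
  qed
qed

lemma sg_eq: "x \<in> carrier G \<Longrightarrow> y \<in> carrier G \<Longrightarrow> x <# H = y <# H \<Longrightarrow> sg \<sigma> x = sg \<sigma> y"
  unfolding sg_def using lcos_H_iff[of x] lcos_H_iff[of y] by simp

definition cnd where "cnd x y z \<longleftrightarrow> (x \<in> H \<and> y <# H = z <# H) \<or> (y \<in> H \<and> x <# H = z <# H)
   \<or> (z \<in> H \<and> x <# H = y <# H)"

lemma avg:
  assumes x: "x \<in> carrier G" and y: "y \<in> carrier G" and z: "z \<in> carrier G"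
  shows "(\<Sum>\<sigma>\<in>Sg. sg \<sigma> x * sg \<sigma> y * sg \<sigma> z) = (if cnd x y z then int (card Sg) else 0)"
proof (cases "cnd x y z")
  case True
  have hx: "x \<in> H \<longleftrightarrow> x <# H = H" using lcos_H_iff x by simp
  have hy: "y \<in> H \<longleftrightarrow> y <# H = H" using lcos_H_iff y by simp
  have hz: "z \<in> H \<longleftrightarrow> z <# H = H" using lcos_H_iff z by simp
  have "\<forall>\<sigma>\<in>Sg. sg \<sigma> x * sg \<sigma> y * sg \<sigma> z = 1"
  proof
    fix \<sigma> assume s: "\<sigma> \<in> Sg"
    note q = sg_sq[OF s x] sg_sq[OF s y] sg_sq[OF s z]
    show "sg \<sigma> x * sg \<sigma> y * sg \<sigma> z = 1"
      using True unfolding cnd_def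
    proof (elim disjE conjE)
      assume "x \<in> H" "y <# H = z <# H"
      then have "sg \<sigma> x = 1" "sg \<sigma> y = sg \<sigma> z" using sg_eq[OF y z] unfolding sg_def by auto
      then show ?thesis using q by simp
    next
      assume "y \<in> H" "x <# H = z <# H"
      then have "sg \<sigma> y = 1" "sg \<sigma> x = sg \<sigma> z" using sg_eq[OF x z] unfolding sg_def by auto
      then show ?thesis using q by simp
    next
      assume "z \<in> H" "x <# H = y <# H"
      then have "sg \<sigma> z = 1" "sg \<sigma> x = sg \<sigma> y" using sg_eq[OF x y] unfolding sg_def by auto
      then show ?thesis using q by simp
    qed
  qed
  then show ?thesis using True by simp
next
  case False
  define CX where "CX = x <# H"
  define CY where "CY = y <# H"
  define CZ where "CZ = z <# H"
  have hx: "x \<in> H \<longleftrightarrow> CX = H" using lcos_H_iff x CX_def by simp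
  have hy: "y \<in> H \<longleftrightarrow> CY = H" using lcos_H_iff y CY_def by simp
  have hz: "z \<in> H \<longleftrightarrow> CZ = H" using lcos_H_iff z CZ_def by simp
  have cX: "x \<notin> H \<Longrightarrow> CX \<in> Cs" using coset_Cs x CX_def by simp
  have cY: "y \<notin> H \<Longrightarrow> CY \<in> Cs" using coset_Cs y CY_def by simp
  have cZ: "z \<notin> H \<Longrightarrow> CZ \<in> Cs" using coset_Cs z CZ_def by simp
  have nc: "\<not> ((CX = H \<and> CY = CZ) \<or> (CY = H \<and> CX = CZ) \<or> (CZ = H \<and> CX = CY))"
    using False hx hy hz unfolding cnd_def CX_def CY_def CZ_def by simp
  have "\<exists>a\<in>Cs. (if CX = a then -1 else 1) * (if CY = a then -1 else 1) * (if CZ = a then -1 else (1::int)) = -1"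
  proof (cases "x \<in> H")
    case xn: False
    show ?thesis
    proof (cases "CX \<noteq> CY \<and> CX \<noteq> CZ")
      case True then show ?thesis using cX xn by (intro bexI[of _ CX]) auto
    next
      case F1: False
      show ?thesis
      proof (cases "CX = CY \<and> CX = CZ")
        case True then show ?thesis using cX xn by (intro bexI[of _ CX]) auto
      next
        case F2: False
        show ?thesis
        proof (cases "CX = CY")
          case True
          then have "CX \<noteq> CZ" using F2 by simp
          show ?thesis
          proof (cases "z \<in> H")
            case True then show ?thesis using nc hz \<open>CX = CY\<close> by simp
          next
            case False then show ?thesis using cZ \<open>CX = CY\<close> \<open>CX \<noteq> CZ\<close>
              by (intro bexI[of _ CZ]) auto
          qed
        next
          case False
          then have "CX = CZ" using F1 by simp
          show ?thesis
          proof (cases "y \<in> H")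
            case True then show ?thesis using nc hy \<open>CX = CZ\<close> by simp
          next
            case False then show ?thesis using cY \<open>CX \<noteq> CY\<close> \<open>CX = CZ\<close>
              by (intro bexI[of _ CY]) auto
          qed
        qed
      qed
    qed
  next
    case xh: True
    then have "CX = H" using hx by simp
    show ?thesis
    proof (cases "y \<in> H")
      case yn: False
      then have "CY \<noteq> H" using hy by simp
      show ?thesis
      proof (cases "CY = CZ")
        case True then show ?thesis using nc \<open>CX = H\<close> by simp
      next
        case False then show ?thesis using cY yn \<open>CY \<noteq> H\<close> \<open>CX = H\<close>
          by (intro bexI[of _ CY]) auto
      qed
    next
      case yh: True
      then have "CY = H" using hy by simp
      show ?thesis
      proof (cases "z \<in> H")
        case True then show ?thesis using nc \<open>CX = H\<close> \<open>CY = H\<close> hz by simp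
      next
        case False
        then have "CZ \<noteq> H" using hz by simp
        then show ?thesis using cZ False \<open>CX = H\<close> \<open>CY = H\<close>
          by (intro bexI[of _ CZ]) auto
      qed
    qed
  qed
  then obtain a where a: "a \<in> Cs"
    and e: "(if CX = a then -1 else 1) * (if CY = a then -1 else 1) * (if CZ = a then -1 else (1::int)) = -1"
    by blast
  have "(\<Sum>\<sigma>\<in>Sg. sg \<sigma> x * sg \<sigma> y * sg \<sigma> z) = 0"
  proof (rule flip_sum_zero[OF a], rule ballI)
    fix \<sigma> assume "\<sigma> \<in> Sg"
    have "sg (fl a \<sigma>) x * sg (fl a \<sigma>) y * sg (fl a \<sigma>) z =
      ((if CX = a then -1 else 1) * (if CY = a then -1 else 1) * (if CZ = a then -1 else (1::int)))
      * (sg \<sigma> x * sg \<sigma> y * sg \<sigma> z)"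
      using sg_fl[OF a x] sg_fl[OF a y] sg_fl[OF a z] unfolding CX_def CY_def CZ_def
      by (simp add: algebra_simps)
    then show "sg (fl a \<sigma>) x * sg (fl a \<sigma>) y * sg (fl a \<sigma>) z = - (sg \<sigma> x * sg \<sigma> y * sg \<sigma> z)"
      using e by simp
  qed
  then show ?thesis using False by simp
qed


lemma hom_sum_nonneg:
  fixes \<psi> :: "'a \<Rightarrow> int"
  assumes Kc: "K \<subseteq> carrier G" and Kf: "finite K"
    and mc: "\<And>a b. a \<in> K \<Longrightarrow> b \<in> K \<Longrightarrow> a \<otimes> b \<in> K"
    and ic: "\<And>a. a \<in> K \<Longrightarrow> inv a \<in> K"
    and pm: "\<And>a. a \<in> K \<Longrightarrow> \<psi> a \<in> {1,-1}"
    and hm: "\<And>a b. a \<in> K \<Longrightarrow> b \<in> K \<Longrightarrow> \<psi> (a \<otimes> b) = \<psi> a * \<psi> b"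
  shows "0 \<le> sum \<psi> K"
proof (cases "\<exists>k\<in>K. \<psi> k \<noteq> 1")
  case True
  then obtain k where k: "k \<in> K" "\<psi> k \<noteq> 1" by blast
  then have km: "\<psi> k = -1" using pm[OF k(1)] by simp
  have kc: "k \<in> carrier G" using Kc k(1) by (rule subsetD)
  have b: "bij_betw (\<lambda>h. k \<otimes> h) K K"
  proof (rule bij_betw_byWitness[where f'="\<lambda>h. inv k \<otimes> h"])
    show "\<forall>a\<in>K. inv k \<otimes> (k \<otimes> a) = a"
    proof
      fix a assume "a \<in> K"
      then have "a \<in> carrier G" using Kc by (rule subsetD[rotated])
      then show "inv k \<otimes> (k \<otimes> a) = a" using kc by (simp add: m_assoc[symmetric])
    qed
    show "\<forall>a\<in>K. k \<otimes> (inv k \<otimes> a) = a"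
    proof
      fix a assume "a \<in> K"
      then have "a \<in> carrier G" using Kc by (rule subsetD[rotated])
      then show "k \<otimes> (inv k \<otimes> a) = a" using kc by (simp add: m_assoc[symmetric])
    qed
    show "(\<lambda>h. k \<otimes> h) ` K \<subseteq> K" using mc k(1) by auto
    show "(\<lambda>h. inv k \<otimes> h) ` K \<subseteq> K" using mc ic k(1) by auto
  qed
  have "sum \<psi> K = sum (\<lambda>h. \<psi> (k \<otimes> h)) K" using sum.reindex_bij_betw[OF b, of \<psi>] by simp
  also have "\<dots> = sum (\<lambda>h. - \<psi> h) K" using hm[OF k(1)] km by (intro sum.cong) auto
  also have "\<dots> = - sum \<psi> K" by (simp add: sum_negf)
  finally have "sum \<psi> K = 0" by simp
  then show ?thesis by simp
next
  case False
  then have "sum \<psi> K = sum (\<lambda>_. 1) K" by (intro sum.cong) auto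
  then show ?thesis by simp
qed

definition val where "val x y = f0 x * f0 y * f0 (x \<otimes> y)"
definition Ww where "Ww x y = (if cnd x y (x \<otimes> y) then val x y else 0)"
definition Aa where "Aa x y = (if y \<in> H then val x y else 0)"
definition Bb where "Bb x y = (if y \<notin> H \<and> x \<in> H \<and> y <# H = (x \<otimes> y) <# H then val x y else 0)"
definition Cc where "Cc x y = (if y \<notin> H \<and> x \<notin> H \<and> x \<otimes> y \<in> H \<and> x <# H = y <# H then val x y else 0)"

lemma H_cancel: "x \<in> H \<Longrightarrow> y \<in> carrier G \<Longrightarrow> x \<otimes> y \<in> H \<Longrightarrow> y \<in> H"
proof -
  assume x: "x \<in> H" and y: "y \<in> carrier G" and xy: "x \<otimes> y \<in> H"
  have xc: "x \<in> carrier G" using x H_carr by (rule subsetD[rotated])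
  have "inv x \<otimes> (x \<otimes> y) \<in> H" using H_inv[OF x] xy by (rule H_mult)
  then show "y \<in> H" using xc y by (simp add: m_assoc[symmetric])
qed

lemma W_split:
  assumes x: "x \<in> carrier G" and y: "y \<in> carrier G"
  shows "Ww x y = Aa x y + Bb x y + Cc x y"
proof (cases "y \<in> H")
  case True
  have "x <# H = (x \<otimes> y) <# H" using lcos_mult_eq[OF x True] by simp
  then have "cnd x y (x \<otimes> y)" using True unfolding cnd_def by simp
  then show ?thesis using True unfolding Ww_def Aa_def Bb_def Cc_def by simp
next
  case yn: False
  show ?thesis
  proof (cases "x \<in> H")
    case True
    then have "x \<otimes> y \<notin> H" using H_cancel[OF True y] yn by blast
    then have "cnd x y (x \<otimes> y) = (y <# H = (x \<otimes> y) <# H)" using True yn unfolding cnd_def by simp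
    then show ?thesis using True yn unfolding Ww_def Aa_def Bb_def Cc_def by simp
  next
    case False
    then have "cnd x y (x \<otimes> y) = (x \<otimes> y \<in> H \<and> x <# H = y <# H)" using False yn unfolding cnd_def by simp
    then show ?thesis using False yn unfolding Ww_def Aa_def Bb_def Cc_def by simp
  qed
qed

lemma sum_filter: "finite A \<Longrightarrow> (\<Sum>x\<in>A. if P x then g x else 0) = (\<Sum>x\<in>{x\<in>A. P x}. g x)"
  by (simp add: sum.inter_filter)

lemma sumA: "(\<Sum>x\<in>carrier G. \<Sum>y\<in>carrier G. Aa x y) = int (card (carrier G) * card H)"
proof -
  have "\<And>x. x \<in> carrier G \<Longrightarrow> (\<Sum>y\<in>carrier G. Aa x y) = int (card H)"
  proof -
    fix x assume x: "x \<in> carrier G"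
    have e: "{y \<in> carrier G. y \<in> H} = H" using H_carr by blast
    have "(\<Sum>y\<in>carrier G. Aa x y) = (\<Sum>y\<in>H. val x y)"
      unfolding Aa_def using sum_filter[OF fin, of "\<lambda>y. y \<in> H" "val x"] e by simp
    also have "\<dots> = (\<Sum>y\<in>H. 1)"
    proof (rule sum.cong[OF refl])
      fix y assume y: "y \<in> H"
      have "val x y = (f0 x * f0 x) * (\<phi> y * \<phi> y)"
        unfolding val_def using f0_right[OF x y] f0_H[OF y] by (simp add: algebra_simps)
      then show "val x y = 1" using f0_sq[OF x] phi_sq[OF y] by simp
    qed
    finally show "(\<Sum>y\<in>carrier G. Aa x y) = int (card H)" by simp
  qed
  then have "(\<Sum>x\<in>carrier G. \<Sum>y\<in>carrier G. Aa x y) = (\<Sum>x\<in>carrier G. int (card H))"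
    by (rule sum.cong[OF refl])
  then show ?thesis by simp
qed

lemma sumB_y:
  assumes y: "y \<in> carrier G"
  shows "0 \<le> (\<Sum>x\<in>carrier G. Bb x y)"
proof (cases "y \<in> H")
  case True
  then show ?thesis unfolding Bb_def by simp
next
  case yn: False
  define K where "K = {x \<in> H. inv y \<otimes> x \<otimes> y \<in> H}"
  have yi: "inv y \<in> carrier G" using y by simp
  have KH: "K \<subseteq> H" unfolding K_def by auto
  have Kc: "K \<subseteq> carrier G" using KH H_carr by (rule order_trans)
  have cond: "\<And>x. x \<in> carrier G \<Longrightarrow> (x \<in> H \<and> y <# H = (x \<otimes> y) <# H) = (x \<in> K)"
  proof -
    fix x assume x: "x \<in> carrier G"
    have "(y <# H = (x \<otimes> y) <# H) = (inv y \<otimes> (x \<otimes> y) \<in> H)" using lcos_eq_iff[OF y] x y by simp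
    also have "inv y \<otimes> (x \<otimes> y) = inv y \<otimes> x \<otimes> y" using x y by (simp add: m_assoc)
    finally show "(x \<in> H \<and> y <# H = (x \<otimes> y) <# H) = (x \<in> K)" unfolding K_def by simp
  qed
  define \<psi> where "\<psi> x = \<phi> x * \<phi> (inv y \<otimes> x \<otimes> y)" for x
  have e: "{x \<in> carrier G. x \<in> H \<and> y <# H = (x \<otimes> y) <# H} = K" using cond Kc by blast
  have "(\<Sum>x\<in>carrier G. Bb x y) = (\<Sum>x\<in>K. val x y)"
    unfolding Bb_def using yn sum_filter[OF fin, of "\<lambda>x. x \<in> H \<and> y <# H = (x \<otimes> y) <# H" "\<lambda>x. val x y"] e by simp
  also have "\<dots> = sum \<psi> K"
  proof (rule sum.cong[OF refl])
    fix x assume xK: "x \<in> K"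
    then have xH: "x \<in> H" and c: "inv y \<otimes> x \<otimes> y \<in> H" unfolding K_def by auto
    have xc: "x \<in> carrier G" using xH H_carr by (rule subsetD[rotated])
    have "x \<otimes> y = y \<otimes> (inv y \<otimes> x \<otimes> y)" using xc y by (simp add: m_assoc[symmetric])
    then have "f0 (x \<otimes> y) = f0 y * \<phi> (inv y \<otimes> x \<otimes> y)" using f0_right[OF y c] by simp
    then have "val x y = (f0 y * f0 y) * (\<phi> x * \<phi> (inv y \<otimes> x \<otimes> y))"
      unfolding val_def using f0_H[OF xH] by (simp add: algebra_simps)
    then show "val x y = \<psi> x" unfolding \<psi>_def using f0_sq[OF y] by simp
  qed
  also have "0 \<le> sum \<psi> K"
  proof (rule hom_sum_nonneg[OF Kc])
    show "finite K" using finH KH by (rule finite_subset[rotated])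
  next
    fix a b assume a: "a \<in> K" and b: "b \<in> K"
    then have aH: "a \<in> H" and bH: "b \<in> H" and ca: "inv y \<otimes> a \<otimes> y \<in> H" and cb: "inv y \<otimes> b \<otimes> y \<in> H"
      unfolding K_def by auto
    have ac: "a \<in> carrier G" using aH H_carr by (rule subsetD[rotated])
    have bc: "b \<in> carrier G" using bH H_carr by (rule subsetD[rotated])
    have eq: "inv y \<otimes> (a \<otimes> b) \<otimes> y = (inv y \<otimes> a \<otimes> y) \<otimes> (inv y \<otimes> b \<otimes> y)"
      using ac bc y by (simp add: m_assoc[symmetric])
    show "a \<otimes> b \<in> K" unfolding K_def using H_mult[OF aH bH] eq H_mult[OF ca cb] by simp
    show "\<psi> (a \<otimes> b) = \<psi> a * \<psi> b" unfolding \<psi>_def using eq phi_mult aH bH ca cb by simp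
  next
    fix a assume a: "a \<in> K"
    then have aH: "a \<in> H" and ca: "inv y \<otimes> a \<otimes> y \<in> H" unfolding K_def by auto
    have ac: "a \<in> carrier G" using aH H_carr by (rule subsetD[rotated])
    have "inv (inv y \<otimes> a \<otimes> y) = inv y \<otimes> inv a \<otimes> y"
      using ac y by (simp add: inv_mult_group m_assoc)
    then show "inv a \<in> K" unfolding K_def using H_inv[OF aH] H_inv[OF ca] by simp
    have p1: "\<phi> a \<in> {1,-1}" using phi_pm aH by blast
    have p2: "\<phi> (inv y \<otimes> a \<otimes> y) \<in> {1,-1}" using phi_pm ca by blast
    show "\<psi> a \<in> {1,-1}" unfolding \<psi>_def using p1 p2 by auto
  qed
  finally show ?thesis .
qed


definition Dd where "Dd x = (if x \<otimes> x \<in> H then \<phi> (x \<otimes> x) else 0)"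

lemma subH: "x \<in> H \<Longrightarrow> x \<in> carrier G" by (rule subsetD[OF H_carr])

lemma H_cancel_r: "y \<in> carrier G \<Longrightarrow> x \<in> H \<Longrightarrow> y \<otimes> x \<in> H \<Longrightarrow> y \<in> H"
proof -
  assume y: "y \<in> carrier G" and x: "x \<in> H" and yx: "y \<otimes> x \<in> H"
  have "(y \<otimes> x) \<otimes> inv x \<in> H" using yx H_inv[OF x] by (rule H_mult)
  then show "y \<in> H" using y subH[OF x] by simp
qed

lemma sumC_x:
  assumes x: "x \<in> carrier G"
  shows "(\<Sum>y\<in>carrier G. Cc x y) = (if x \<in> H then 0 else int (card H) * Dd x)"
proof (cases "x \<in> H")
  case True then show ?thesis unfolding Cc_def by simp
next
  case xn: False
  have sub1: "x <# H \<subseteq> carrier G" using x subH unfolding l_coset_def by auto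
  have "(\<Sum>y\<in>carrier G. Cc x y) = (\<Sum>y\<in>x <# H. Cc x y)"
  proof (rule sum.mono_neutral_right[OF fin sub1], rule ballI)
    fix y assume y: "y \<in> carrier G - (x <# H)"
    have "x <# H \<noteq> y <# H"
    proof
      assume e: "x <# H = y <# H"
      have "y \<otimes> \<one> \<in> y <# H" using H_one unfolding l_coset_def by blast
      then show False using e y by simp
    qed
    then show "Cc x y = 0" unfolding Cc_def by simp
  qed
  also have "x <# H = (\<lambda>k. x \<otimes> k) ` H" unfolding l_coset_def by auto
  also have "(\<Sum>y\<in>(\<lambda>k. x \<otimes> k) ` H. Cc x y) = (\<Sum>k\<in>H. Cc x (x \<otimes> k))"
  proof (rule sum.reindex[unfolded comp_def])
    show "inj_on (\<lambda>k. x \<otimes> k) H" unfolding inj_on_def using x subH by simp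
  qed
  also have "\<dots> = (\<Sum>k\<in>H. Dd x)"
  proof (rule sum.cong[OF refl])
    fix k assume k: "k \<in> H"
    have kc: "k \<in> carrier G" using subH[OF k] .
    have n1: "x \<otimes> k \<notin> H" using H_cancel_r[OF x k] xn by blast
    have e1: "x <# H = (x \<otimes> k) <# H" using lcos_mult_eq[OF x k] by simp
    have a1: "x \<otimes> (x \<otimes> k) = (x \<otimes> x) \<otimes> k" using x kc by (simp add: m_assoc)
    have xx: "x \<otimes> x \<in> carrier G" using x by simp
    have i1: "(x \<otimes> (x \<otimes> k) \<in> H) = (x \<otimes> x \<in> H)"
    proof
      assume "x \<otimes> (x \<otimes> k) \<in> H"
      then have "x \<otimes> x \<otimes> k \<in> H" using a1 by simp
      then show "x \<otimes> x \<in> H" using H_cancel_r[OF xx k] by simp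
    next
      assume "x \<otimes> x \<in> H"
      then have "x \<otimes> x \<otimes> k \<in> H" using H_mult k by simp
      then show "x \<otimes> (x \<otimes> k) \<in> H" using a1 by simp
    qed
    show "Cc x (x \<otimes> k) = Dd x"
    proof (cases "x \<otimes> x \<in> H")
      case True
      have v: "val x (x \<otimes> k) = (f0 x * f0 x) * (\<phi> k * \<phi> k) * \<phi> (x \<otimes> x)"
        unfolding val_def using f0_right[OF x k] f0_H[OF H_mult[OF True k]] phi_mult True k a1
        by (simp add: algebra_simps)
      then have "val x (x \<otimes> k) = \<phi> (x \<otimes> x)" using f0_sq[OF x] phi_sq[OF k] by simp
      then show ?thesis unfolding Cc_def Dd_def using True n1 xn e1 i1 by simp
    next
      case False
      then show ?thesis unfolding Cc_def Dd_def using i1 by simp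
    qed
  qed
  finally show ?thesis using xn finH by simp
qed

lemma T_inv: "t \<in> T \<Longrightarrow> inv t = t"
proof -
  assume tT: "t \<in> T"
  have t: "t \<in> carrier G" using T_sub tT by (rule subsetD)
  have "t \<otimes> t = \<one>" using invol tT by simp
  then show "inv t = t" using inv_equality[of t t] t by simp
qed

lemma Dsum_t:
  assumes tT: "t \<in> T"
  shows "0 \<le> (\<Sum>h\<in>H. Dd (t \<otimes> h))"
proof -
  have t: "t \<in> carrier G" using T_sub tT by (rule subsetD)
  have tt: "t \<otimes> t = \<one>" using invol tT by blast
  have tt2: "\<And>z. z \<in> carrier G \<Longrightarrow> z \<otimes> t \<otimes> t = z" using tt t by (simp add: m_assoc)
  define K where "K = {h \<in> H. t \<otimes> h \<otimes> t \<in> H}"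
  define \<psi> where "\<psi> h = \<phi> (t \<otimes> h \<otimes> t) * \<phi> h" for h
  have KH: "K \<subseteq> H" unfolding K_def by auto
  have Kc: "K \<subseteq> carrier G" using KH H_carr by (rule order_trans)
  have "(\<Sum>h\<in>H. Dd (t \<otimes> h)) = (\<Sum>h\<in>H. if h \<in> K then \<psi> h else 0)"
  proof (rule sum.cong[OF refl])
    fix h assume h: "h \<in> H"
    have hc: "h \<in> carrier G" using subH[OF h] .
    have a: "t \<otimes> h \<otimes> (t \<otimes> h) = (t \<otimes> h \<otimes> t) \<otimes> h" using t hc by (simp add: m_assoc)
    have tht: "t \<otimes> h \<otimes> t \<in> carrier G" using t hc by simp
    have i: "(t \<otimes> h \<otimes> (t \<otimes> h) \<in> H) = (t \<otimes> h \<otimes> t \<in> H)"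
    proof
      assume "t \<otimes> h \<otimes> (t \<otimes> h) \<in> H"
      then have "t \<otimes> h \<otimes> t \<otimes> h \<in> H" using a by simp
      then show "t \<otimes> h \<otimes> t \<in> H" using H_cancel_r[OF tht h] by simp
    next
      assume "t \<otimes> h \<otimes> t \<in> H"
      then have "t \<otimes> h \<otimes> t \<otimes> h \<in> H" using H_mult h by simp
      then show "t \<otimes> h \<otimes> (t \<otimes> h) \<in> H" using a by simp
    qed
    show "Dd (t \<otimes> h) = (if h \<in> K then \<psi> h else 0)"
      unfolding Dd_def K_def \<psi>_def using i a h phi_mult by auto
  qed
  also have "\<dots> = sum \<psi> K"
  proof -
    have "{h \<in> H. h \<in> K} = K" using KH by auto
    then show ?thesis using sum_filter[OF finH, of "\<lambda>h. h \<in> K" \<psi>] by simp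
  qed
  also have "0 \<le> sum \<psi> K"
  proof (rule hom_sum_nonneg[OF Kc])
    show "finite K" using finH KH by (rule finite_subset[rotated])
  next
    fix a b assume a: "a \<in> K" and b: "b \<in> K"
    then have aH: "a \<in> H" and bH: "b \<in> H" and ca: "t \<otimes> a \<otimes> t \<in> H" and cb: "t \<otimes> b \<otimes> t \<in> H"
      unfolding K_def by auto
    have ac: "a \<in> carrier G" using subH[OF aH] .
    have bc: "b \<in> carrier G" using subH[OF bH] .
    have "(t \<otimes> a \<otimes> t) \<otimes> (t \<otimes> b \<otimes> t) = t \<otimes> a \<otimes> t \<otimes> t \<otimes> b \<otimes> t"
      using ac bc t by (simp add: m_assoc[symmetric])
    also have "\<dots> = t \<otimes> a \<otimes> b \<otimes> t" using tt2[of "t \<otimes> a"] ac t by simp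
    finally have eq: "t \<otimes> (a \<otimes> b) \<otimes> t = (t \<otimes> a \<otimes> t) \<otimes> (t \<otimes> b \<otimes> t)"
      using ac bc t by (simp add: m_assoc)
    show "a \<otimes> b \<in> K" unfolding K_def using H_mult[OF aH bH] eq H_mult[OF ca cb] by simp
    show "\<psi> (a \<otimes> b) = \<psi> a * \<psi> b" unfolding \<psi>_def using eq phi_mult aH bH ca cb by simp
  next
    fix a assume a: "a \<in> K"
    then have aH: "a \<in> H" and ca: "t \<otimes> a \<otimes> t \<in> H" unfolding K_def by auto
    have ac: "a \<in> carrier G" using subH[OF aH] .
    have "inv (t \<otimes> a \<otimes> t) = t \<otimes> inv a \<otimes> t"
      using ac t T_inv[OF tT] by (simp add: inv_mult_group m_assoc)
    then show "inv a \<in> K" unfolding K_def using H_inv[OF aH] H_inv[OF ca] by simp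
    have p1: "\<phi> a \<in> {1,-1}" using phi_pm aH by blast
    have p2: "\<phi> (t \<otimes> a \<otimes> t) \<in> {1,-1}" using phi_pm ca by blast
    show "\<psi> a \<in> {1,-1}" unfolding \<psi>_def using p1 p2 by auto
  qed
  finally show ?thesis .
qed


lemma Dsum: "0 \<le> (\<Sum>x\<in>carrier G - H. Dd x)"
proof -
  define g where "g p = fst p \<otimes> snd p" for p
  have finT: "finite T" using fin T_sub by (rule finite_subset[rotated])
  have inj: "inj_on g ((T - H) \<times> H)"
  proof (rule inj_onI)
    fix p q assume p: "p \<in> (T - H) \<times> H" and q: "q \<in> (T - H) \<times> H" and e: "g p = g q"
    obtain t1 h1 where p1: "p = (t1, h1)" "t1 \<in> T" "h1 \<in> H" using p by auto
    obtain t2 h2 where q1: "q = (t2, h2)" "t2 \<in> T" "h2 \<in> H" using q by auto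
    have t1c: "t1 \<in> carrier G" using T_sub p1(2) by (rule subsetD)
    have t2c: "t2 \<in> carrier G" using T_sub q1(2) by (rule subsetD)
    have e2: "t1 \<otimes> h1 = t2 \<otimes> h2" using e p1 q1 unfolding g_def by simp
    have "t1 <# H = t2 <# H"
      using lcos_mult_eq[OF t1c p1(3)] lcos_mult_eq[OF t2c q1(3)] e2 by simp
    moreover have "inj_on (\<lambda>t. t <# H) T" using T_bij unfolding bij_betw_def by simp
    ultimately have "t1 = t2" using inj_onD p1(2) q1(2) by fastforce
    then have "h1 = h2" using e2 t1c subH[OF p1(3)] subH[OF q1(3)] by simp
    then show "p = q" using p1 q1 \<open>t1 = t2\<close> by simp
  qed
  have img: "g ` ((T - H) \<times> H) = carrier G - H"
  proof
    show "g ` ((T - H) \<times> H) \<subseteq> carrier G - H"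
    proof
      fix x assume "x \<in> g ` ((T - H) \<times> H)"
      then obtain t h where th: "t \<in> T" "t \<notin> H" "h \<in> H" "x = t \<otimes> h" unfolding g_def by auto
      have tc: "t \<in> carrier G" using T_sub th(1) by (rule subsetD)
      have "x \<notin> H" using H_cancel_r[OF tc th(3)] th by blast
      then show "x \<in> carrier G - H" using tc subH[OF th(3)] th(4) by simp
    qed
  next
    show "carrier G - H \<subseteq> g ` ((T - H) \<times> H)"
    proof
      fix x assume x: "x \<in> carrier G - H"
      then have xc: "x \<in> carrier G" and xn: "x \<notin> H" by auto
      have t: "tau x \<in> T" "tau x <# H = x <# H" using tau[OF xc] by auto
      have tc: "tau x \<in> carrier G" using tau_carr[OF xc] .
      have "x <# H \<noteq> H" using lcos_H_iff[OF xc] xn by simp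
      then have tn: "tau x \<notin> H" using lcos_H_iff[OF tc] t(2) by simp
      have h: "inv (tau x) \<otimes> x \<in> H" using tau_H[OF xc] .
      have e: "x = g (tau x, inv (tau x) \<otimes> x)" unfolding g_def using tc xc by (simp add: m_assoc[symmetric])
      have m: "(tau x, inv (tau x) \<otimes> x) \<in> (T - H) \<times> H" using t(1) tn h by simp
      show "x \<in> g ` ((T - H) \<times> H)" by (rule image_eqI[where f=g, OF e m])
    qed
  qed
  have "(\<Sum>x\<in>carrier G - H. Dd x) = (\<Sum>p\<in>(T - H) \<times> H. Dd (g p))"
    using sum.reindex[OF inj, of Dd] img by simp
  also have "\<dots> = (\<Sum>t\<in>T - H. \<Sum>h\<in>H. Dd (t \<otimes> h))"
    unfolding g_def by (simp add: sum.cartesian_product case_prod_beta)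
  also have "0 \<le> \<dots>"
  proof (rule sum_nonneg)
    fix t assume "t \<in> T - H"
    then show "0 \<le> (\<Sum>h\<in>H. Dd (t \<otimes> h))" using Dsum_t by simp
  qed
  finally show ?thesis .
qed

lemma sumC: "0 \<le> (\<Sum>x\<in>carrier G. \<Sum>y\<in>carrier G. Cc x y)"
proof -
  have "(\<Sum>x\<in>carrier G. \<Sum>y\<in>carrier G. Cc x y) = (\<Sum>x\<in>carrier G. if x \<notin> H then int (card H) * Dd x else 0)"
    using sumC_x by (intro sum.cong) auto
  also have "\<dots> = (\<Sum>x\<in>{x \<in> carrier G. x \<notin> H}. int (card H) * Dd x)"
    by (rule sum_filter[OF fin])
  also have "{x \<in> carrier G. x \<notin> H} = carrier G - H" by auto
  also have "(\<Sum>x\<in>carrier G - H. int (card H) * Dd x) = int (card H) * (\<Sum>x\<in>carrier G - H. Dd x)"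
    by (simp add: sum_distrib_left)
  also have "0 \<le> \<dots>" using Dsum by simp
  finally show ?thesis .
qed

lemma sumB: "0 \<le> (\<Sum>x\<in>carrier G. \<Sum>y\<in>carrier G. Bb x y)"
proof -
  have "(\<Sum>x\<in>carrier G. \<Sum>y\<in>carrier G. Bb x y) = (\<Sum>y\<in>carrier G. \<Sum>x\<in>carrier G. Bb x y)"
    by (rule sum.swap)
  also have "0 \<le> \<dots>"
  proof (rule sum_nonneg)
    fix y assume "y \<in> carrier G"
    then show "0 \<le> (\<Sum>x\<in>carrier G. Bb x y)" by (rule sumB_y)
  qed
  finally show ?thesis .
qed

lemma sumW: "int (card (carrier G) * card H) \<le> (\<Sum>x\<in>carrier G. \<Sum>y\<in>carrier G. Ww x y)"
proof -
  have "(\<Sum>x\<in>carrier G. \<Sum>y\<in>carrier G. Ww x y) =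
    (\<Sum>x\<in>carrier G. \<Sum>y\<in>carrier G. Aa x y) + (\<Sum>x\<in>carrier G. \<Sum>y\<in>carrier G. Bb x y)
      + (\<Sum>x\<in>carrier G. \<Sum>y\<in>carrier G. Cc x y)"
    using W_split by (simp add: sum.distrib)
  then show ?thesis using sumA sumB sumC by simp
qed


definition ff where "ff \<sigma> x = sg \<sigma> x * f0 x"
definition Ssum where "Ssum \<sigma> = (\<Sum>x\<in>carrier G. \<Sum>y\<in>carrier G. ff \<sigma> x * ff \<sigma> y * ff \<sigma> (x \<otimes> y))"

lemma avg_sum: "(\<Sum>\<sigma>\<in>Sg. Ssum \<sigma>) = int (card Sg) * (\<Sum>x\<in>carrier G. \<Sum>y\<in>carrier G. Ww x y)"
proof -
  have inner: "(\<Sum>\<sigma>\<in>Sg. ff \<sigma> x * ff \<sigma> y * ff \<sigma> (x \<otimes> y)) = int (card Sg) * Ww x y"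
    if x: "x \<in> carrier G" and y: "y \<in> carrier G" for x y
  proof -
    have xy: "x \<otimes> y \<in> carrier G" using x y by simp
    have "(\<Sum>\<sigma>\<in>Sg. ff \<sigma> x * ff \<sigma> y * ff \<sigma> (x \<otimes> y))
        = (\<Sum>\<sigma>\<in>Sg. (sg \<sigma> x * sg \<sigma> y * sg \<sigma> (x \<otimes> y)) * val x y)"
      unfolding ff_def val_def by (simp add: algebra_simps)
    also have "\<dots> = (\<Sum>\<sigma>\<in>Sg. sg \<sigma> x * sg \<sigma> y * sg \<sigma> (x \<otimes> y)) * val x y"
      by (simp add: sum_distrib_right)
    also have "\<dots> = int (card Sg) * Ww x y"
      using avg[OF x y xy] unfolding Ww_def by simp
    finally show ?thesis .
  qed
  have "(\<Sum>\<sigma>\<in>Sg. Ssum \<sigma>) = (\<Sum>x\<in>carrier G. \<Sum>\<sigma>\<in>Sg. \<Sum>y\<in>carrier G. ff \<sigma> x * ff \<sigma> y * ff \<sigma> (x \<otimes> y))"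
    unfolding Ssum_def by (rule sum.swap)
  also have "\<dots> = (\<Sum>x\<in>carrier G. \<Sum>y\<in>carrier G. \<Sum>\<sigma>\<in>Sg. ff \<sigma> x * ff \<sigma> y * ff \<sigma> (x \<otimes> y))"
    by (rule sum.cong[OF refl], rule sum.swap)
  also have "\<dots> = (\<Sum>x\<in>carrier G. \<Sum>y\<in>carrier G. int (card Sg) * Ww x y)"
    using inner by simp
  also have "\<dots> = int (card Sg) * (\<Sum>x\<in>carrier G. \<Sum>y\<in>carrier G. Ww x y)"
    by (simp add: sum_distrib_left)
  finally show ?thesis .
qed

lemma exists_good: "\<exists>\<sigma>\<in>Sg. int (card (carrier G) * card H) \<le> Ssum \<sigma>"
proof (rule ccontr)
  assume "\<not> ?thesis"
  then have lt: "\<forall>\<sigma>\<in>Sg. Ssum \<sigma> < int (card (carrier G) * card H)" by auto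
  have "(\<Sum>\<sigma>\<in>Sg. Ssum \<sigma>) < (\<Sum>\<sigma>\<in>Sg. int (card (carrier G) * card H))"
    using sum_strict_mono[OF finSg Sg_ne, of Ssum "\<lambda>_. int (card (carrier G) * card H)"] lt by simp
  also have "\<dots> = int (card Sg) * int (card (carrier G) * card H)" by simp
  also have "\<dots> \<le> int (card Sg) * (\<Sum>x\<in>carrier G. \<Sum>y\<in>carrier G. Ww x y)"
    using sumW by (intro mult_left_mono) auto
  also have "\<dots> = (\<Sum>\<sigma>\<in>Sg. Ssum \<sigma>)" using avg_sum by simp
  finally show False by simp
qed

lemma ff_pm: "\<sigma> \<in> Sg \<Longrightarrow> x \<in> carrier G \<Longrightarrow> ff \<sigma> x \<in> {1,-1}"
proof -
  assume s: "\<sigma> \<in> Sg" and x: "x \<in> carrier G"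
  have "sg \<sigma> x \<in> {1,-1}" "f0 x \<in> {1,-1}" using sg_pm[OF s x] f0_pm[OF x] by auto
  then show ?thesis unfolding ff_def by auto
qed

lemma balance: "\<sigma> \<in> Sg \<Longrightarrow> (\<Sum>x\<in>carrier G. ff \<sigma> x) = 0"
proof -
  assume s: "\<sigma> \<in> Sg"
  obtain h0 where h0: "h0 \<in> H" "\<phi> h0 \<noteq> 1" using nontriv by auto
  have "\<phi> h0 \<in> {1,-1}" using phi_pm h0(1) by simp
  then have ph: "\<phi> h0 = -1" using h0(2) by simp
  have hc: "h0 \<in> carrier G" using subH[OF h0(1)] .
  have b: "bij_betw (\<lambda>x. x \<otimes> h0) (carrier G) (carrier G)"
  proof (rule bij_betw_byWitness[where f'="\<lambda>x. x \<otimes> inv h0"])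
    show "\<forall>a\<in>carrier G. a \<otimes> h0 \<otimes> inv h0 = a" using hc by simp
    show "\<forall>a\<in>carrier G. a \<otimes> inv h0 \<otimes> h0 = a" using hc by simp
    show "(\<lambda>x. x \<otimes> h0) ` carrier G \<subseteq> carrier G" using hc by auto
    show "(\<lambda>x. x \<otimes> inv h0) ` carrier G \<subseteq> carrier G" using hc by auto
  qed
  have "(\<Sum>x\<in>carrier G. ff \<sigma> x) = (\<Sum>x\<in>carrier G. ff \<sigma> (x \<otimes> h0))"
    using sum.reindex_bij_betw[OF b, of "ff \<sigma>"] by simp
  also have "\<dots> = (\<Sum>x\<in>carrier G. - ff \<sigma> x)"
  proof (rule sum.cong[OF refl])
    fix x assume x: "x \<in> carrier G"
    have "sg \<sigma> (x \<otimes> h0) = sg \<sigma> x"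
      using sg_eq[of "x \<otimes> h0" x] lcos_mult_eq[OF x h0(1)] x hc by simp
    then show "ff \<sigma> (x \<otimes> h0) = - ff \<sigma> x" unfolding ff_def using f0_right[OF x h0(1)] ph by simp
  qed
  also have "\<dots> = - (\<Sum>x\<in>carrier G. ff \<sigma> x)" by (simp add: sum_negf)
  finally show ?thesis by simp
qed

end

lemma count_lemma:
  fixes A :: "'x set" and f :: "'x \<Rightarrow> int" and m :: "'x \<Rightarrow> 'x \<Rightarrow> 'x"
  assumes fA: "finite A" and pm: "\<forall>x\<in>A. f x \<in> {1,-1}" and mc: "\<forall>x\<in>A. \<forall>y\<in>A. m x y \<in> A"
  shows "(\<Sum>x\<in>A. \<Sum>y\<in>A. f x * f y * f (m x y))
     = 2 * int (card {(x, y). x \<in> A \<and> y \<in> A \<and> f x * f y = f (m x y)}) - int (card A) ^ 2"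
proof -
  define P where "P p = (f (fst p) * f (snd p) = f (m (fst p) (snd p)))" for p
  have val: "f x * f y * f (m x y) = (if P (x, y) then 1 else -1)" if x: "x \<in> A" and y: "y \<in> A" for x y
  proof -
    have "f x \<in> {1,-1}" "f y \<in> {1,-1}" "f (m x y) \<in> {1,-1}" using pm mc x y by auto
    then show ?thesis unfolding P_def by auto
  qed
  have "(\<Sum>x\<in>A. \<Sum>y\<in>A. f x * f y * f (m x y)) = (\<Sum>x\<in>A. \<Sum>y\<in>A. (if P (x, y) then 1 else -1 :: int))"
    using val by simp
  also have "\<dots> = (\<Sum>p\<in>A \<times> A. (if P p then 1 else -1 :: int))"
    by (simp add: sum.cartesian_product)
  also have "\<dots> = (\<Sum>p\<in>A \<times> A. 2 * (if P p then 1 else 0) - 1 :: int)"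
    by (rule sum.cong) auto
  also have "\<dots> = 2 * (\<Sum>p\<in>A \<times> A. (if P p then 1 else 0 :: int)) - int (card (A \<times> A))"
    by (simp add: sum_subtractf sum_distrib_left)
  also have "(\<Sum>p\<in>A \<times> A. (if P p then 1 else 0 :: int)) = int (card {p \<in> A \<times> A. P p})"
    using fA by (simp add: sum.If_cases Int_def)
  also have "{p \<in> A \<times> A. P p} = {(x, y). x \<in> A \<and> y \<in> A \<and> f x * f y = f (m x y)}"
    unfolding P_def by auto
  also have "int (card (A \<times> A)) = int (card A) ^ 2" by (simp add: card_cartesian_product power2_eq_square)
  finally show ?thesis .
qed


theorem theorem4:
  fixes G :: "('a, 'b) monoid_scheme" (structure)
    and H :: "'a set" and \<phi> :: "'a \<Rightarrow> int" and T :: "'a set"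
  assumes "group G"
    and "finite (carrier G)"
    and "subgroup H G"
    and "\<forall>h\<in>H. \<phi> h \<in> {1, -1}"
    and "\<forall>x\<in>H. \<forall>y\<in>H. \<phi> (x \<otimes> y) = \<phi> x * \<phi> y"
    and "\<exists>h\<in>H. \<phi> h \<noteq> 1"
    and "T \<subseteq> carrier G"
    and "bij_betw (\<lambda>t. t <# H) T {x <# H | x. x \<in> carrier G}"
    and "\<forall>c\<in>T. c \<otimes> c = \<one>"
  shows "\<exists>f :: 'a \<Rightarrow> int.
           (\<forall>x\<in>carrier G. f x \<in> {1, -1}) \<and>
           (\<Sum>x\<in>carrier G. real_of_int (f x)) / real (card (carrier G)) = 0 \<and>
           real (card {(x, y). x \<in> carrier G \<and> y \<in> carrier G \<and> f x * f y = f (x \<otimes> y)})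
             / real (card (carrier G)) ^ 2
           \<ge> (1 / 2) * (1 + real (card H) / real (card (carrier G)))"
proof -
  have L: "thm4 G H \<phi> T" unfolding thm4_def thm4_axioms_def using assms by simp
  interpret thm4 G H \<phi> T by (rule L)
  obtain \<sigma> where s: "\<sigma> \<in> Sg" and good: "int (card (carrier G) * card H) \<le> Ssum \<sigma>"
    using exists_good by blast
  define f where "f = ff \<sigma>"
  define A where "A = card {(x, y). x \<in> carrier G \<and> y \<in> carrier G \<and> f x * f y = f (x \<otimes> y)}"
  define n where "n = card (carrier G)"
  define h where "h = card H"
  have pm: "\<forall>x\<in>carrier G. f x \<in> {1, -1}" unfolding f_def using ff_pm[OF s] by simp
  have bal: "(\<Sum>x\<in>carrier G. real_of_int (f x)) = 0"
    using balance[OF s] unfolding f_def by (simp add: of_int_sum[symmetric])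
  have cnt: "Ssum \<sigma> = 2 * int A - int n ^ 2"
    unfolding Ssum_def A_def n_def f_def[symmetric]
    by (rule count_lemma[OF fin pm]) simp
  have "\<one> \<in> carrier G" by simp
  then have "carrier G \<noteq> {}" by blast
  then have npos: "0 < n" unfolding n_def using fin by (simp add: card_gt_0_iff)
  have i1: "int n * int h + int n ^ 2 \<le> 2 * int A" using good cnt unfolding n_def h_def by simp
  have r1: "real n * real h + real n ^ 2 \<le> 2 * real A"
  proof -
    have "real_of_int (int n * int h + int n ^ 2) \<le> real_of_int (2 * int A)"
      using i1 by (rule of_int_le_iff[THEN iffD2])
    then show ?thesis by simp
  qed
  have np: "(0::real) < real n" using npos by simp
  have e1: "(1 / 2) * (1 + real h / real n) = (real n * real h + real n ^ 2) / (2 * real n ^ 2)"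
    using np by (simp add: field_simps power2_eq_square)
  have e2: "(real n * real h + real n ^ 2) / (2 * real n ^ 2) \<le> (2 * real A) / (2 * real n ^ 2)"
    using r1 np by (intro divide_right_mono) auto
  have e3: "(2 * real A) / (2 * real n ^ 2) = real A / real n ^ 2" by simp
  have fin_ineq: "real A / real n ^ 2 \<ge> (1 / 2) * (1 + real h / real n)"
    using e1 e2 e3 by linarith
  show ?thesis
    apply (rule exI[of _ f])
    using pm bal fin_ineq unfolding A_def n_def h_def by simp
qed

end
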